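(* Let $n\geq 1$ and $k\geq 2$ be integers with $f_k\leq n\leq f_{k+1}$, and let $A^{(n)}=\{1,2,\dots,n\}$. The vertex $v$ of the Fibonacci-sum set-graph $G^F_{A^{(n)}}$ corresponding to the full set $A^{(n)}$ has the maximum number of loops among all vertices, and \[ l(v)=\begin{cases} n+\frac{f_k+1}{2}-\frac{\lfloor 4(k+1)/3\rfloor}{2}, & \text{if } n\leq \frac{f_{k+2}}{2},\\[2pt] 2n+\frac{f_k+1}{2}-\frac{\lfloor 4(k+1)/3\rfloor}{2}-\left\lceil \frac{f_{k+2}-1}{2}\right\rceil, & \text{if } n>\frac{f_{k+2}}{2}.\end{cases} \]
   Context: Let $\mathcal{F}=\{f_m\}_{m\ge 0}$ be the Fibonacci numbers, $f_0=0$, $f_1=1$, $f_m=f_{m-1}+f_{m-2}$. The Fibonacci-sum set-graph $G^F_{A^{(n)}}$ is the multigraph (loops and multiple edges allowed) whose vertices are in bijection with the nonempty subsets of $A^{(n)}=\{1,\dots,n\}$; between the vertices corresponding to distinct subsets $S,T$ there is one edge for each pair $(i',j')$ with $i'\in S$, $j'\in T$, $i'\neq j'$ and $i'+j'\in\mathcal{F}$, and at the vertex corresponding to $S$ there is one loop for each pair of distinct elements $i',j'\in S$ with $i'+j'\in\mathcal{F}$. For a vertex $v$, $l(v)$ denotes its number of loops. *)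

theory Defs
  imports "HOL-Number_Theory.Fib" Complex_Main
begin

text \<open>Number of loops at the vertex of the Fibonacci-sum set-graph corresponding to
  the subset S: one loop per unordered pair of distinct elements of S whose sum is a
  Fibonacci number (unordered pairs represented as (i,j) with i < j).\<close>
definition fib_loops :: "nat set \<Rightarrow> nat" where
  "fib_loops S = card {(i, j). i \<in> S \<and> j \<in> S \<and> i < j \<and> i + j \<in> range fib}"

end

theory Submission
  imports Defs
begin

lemma fib_even_iff: "even (fib m) \<longleftrightarrow> 3 dvd m"
proof (induction m rule: less_induct)
  case (less m)
  show ?case
  proof (cases "m < 3")
    case True
    then have "m = 0 \<or> m = 1 \<or> m = 2" by auto
    then show ?thesis by auto
  next
    case False
    then obtain j where j: "m = j + 3" by (metis add.commute le_Suc_ex not_less)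
    have "fib (j + 3) = 2 * fib (j + 1) + fib j"
      by (simp add: numeral_3_eq_3 numeral_2_eq_2)
    then have "even (fib m) \<longleftrightarrow> even (fib j)" using j by simp
    also have "\<dots> \<longleftrightarrow> 3 dvd j" using less j by simp
    also have "\<dots> \<longleftrightarrow> 3 dvd m" using j by simp
    finally show ?thesis .
  qed
qed

lemma loops_Suc:
  "fib_loops {1..Suc n} = fib_loops {1..n} + card {i. 1 \<le> i \<and> i < Suc n \<and> i + Suc n \<in> range fib}"
proof -
  let ?A = "{(i, j). i \<in> {1..n} \<and> j \<in> {1..n} \<and> i < j \<and> i + j \<in> range fib}"
  let ?B = "(\<lambda>i. (i, Suc n)) ` {i. 1 \<le> i \<and> i < Suc n \<and> i + Suc n \<in> range fib}"
  have eq: "{(i, j). i \<in> {1..Suc n} \<and> j \<in> {1..Suc n} \<and> i < j \<and> i + j \<in> range fib} = ?A \<union> ?B"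
    by (auto simp: le_Suc_eq)
  have fA: "finite ?A" by (rule finite_subset[of _ "{1..n} \<times> {1..n}"]) auto
  have fB: "finite ?B" by auto
  have d: "?A \<inter> ?B = {}" by auto
  have cB: "card ?B = card {i. 1 \<le> i \<and> i < Suc n \<and> i + Suc n \<in> range fib}"
    by (rule card_image) (auto simp: inj_on_def)
  show ?thesis unfolding fib_loops_def eq
    using card_Un_disjoint[OF fA fB d] cB by simp
qed

lemma fib_gt_idx: "fib k < fib j \<Longrightarrow> k < j"
  using fib_mono by (metis not_less)

lemma incr:
  assumes "m \<ge> 2" "fib k \<le> m" "m < fib (Suc k)"
  shows "card {i. 1 \<le> i \<and> i < m \<and> i + m \<in> range fib} = (if fib (k+2) < 2*m then 2 else 1)"
proof -
  have k3: "k \<ge> 3"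
  proof (rule ccontr)
    assume "\<not> k \<ge> 3"
    then have "k = 0 \<or> k = 1 \<or> k = 2" by auto
    then show False using assms by (auto simp: numeral_2_eq_2)
  qed
  define t where "t = k - 2"
  have t: "k = Suc (Suc t)" "t \<ge> 1" using k3 unfolding t_def by auto
  have ft: "fib t \<ge> 1" using t fib_neq_0_nat by (simp add: Suc_le_eq)
  have e1: "fib (Suc k) = fib k + fib (Suc t)" using t by simp
  have e2: "fib (k+2) = fib (Suc k) + fib k" by (simp add: fib_plus_2)
  have e3: "fib (k+3) = fib (k+2) + fib (Suc k)" by (simp add: numeral_3_eq_3 numeral_2_eq_2)
  have m1: "fib (Suc t) \<le> fib k" using t fib_Suc_mono by simp
  have ft1: "fib (Suc t) < fib k" using t ft by simp
  define S where "S = {fib (Suc k) - m} \<union> (if fib (k+2) < 2*m then {fib (k+2) - m} else {})"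
  have "{i. 1 \<le> i \<and> i < m \<and> i + m \<in> range fib} = S"
  proof (rule set_eqI, rule iffI)
    fix i assume "i \<in> {i. 1 \<le> i \<and> i < m \<and> i + m \<in> range fib}"
    then obtain j where i: "1 \<le> i" "i < m" "i + m = fib j" by auto
    have "fib k < fib j" using i assms by simp
    then have kj: "k < j" by (rule fib_gt_idx)
    have "fib j < fib (k+3)" using i assms e1 e2 e3 m1 by simp
    then have "j < k + 3" by (rule fib_gt_idx)
    with kj have "j = Suc k \<or> j = k + 2" by auto
    then show "i \<in> S" unfolding S_def using i by auto
  next
    fix i assume "i \<in> S"
    have r1: "fib (Suc k) \<in> range fib" "fib (k+2) \<in> range fib" by (rule rangeI)+
    have b1: "fib (Suc k) < 2 * m" "m < fib (k+2)" using assms e1 e2 ft1 by auto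
    from \<open>i \<in> S\<close> have "i = fib (Suc k) - m \<or> (fib (k+2) < 2*m \<and> i = fib (k+2) - m)"
      unfolding S_def by (auto split: if_splits)
    then show "i \<in> {i. 1 \<le> i \<and> i < m \<and> i + m \<in> range fib}"
    proof
      assume "i = fib (Suc k) - m"
      then have "i + m = fib (Suc k)" "1 \<le> i" "i < m" using b1 assms by auto
      then show ?thesis using r1 by simp
    next
      assume "fib (k+2) < 2*m \<and> i = fib (k+2) - m"
      then have "i + m = fib (k+2)" "1 \<le> i" "i < m" using b1 assms by auto
      then show ?thesis using r1 by simp
    qed
  qed
  moreover have "card S = (if fib (k+2) < 2*m then 2 else 1)"
    unfolding S_def using assms e1 e2 ft ft1 by auto
  ultimately show ?thesis by simp
qed

lemma arith_block:
  fixes a b L n j :: nat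
  assumes j: "j \<ge> 2" and n: "n + 1 = a + b"
    and small: "a \<le> 2 \<Longrightarrow> (j=2 \<and> a=1 \<and> b=1) \<or> (j=3 \<and> a=1 \<and> b=2) \<or> (j=4 \<and> a=2 \<and> b=3)"
    and par: "even a \<longleftrightarrow> 3 dvd (j - 1)"
    and IH: "2 * int L = 2*int n + int b + 1 - (4*int j+4) div 3 + (if a + 2*b < 2*n then 2*int n - 2*int ((a+2*b) div 2) else 0)"
  shows "2 * int (L + 1) = 2*int (n+1) + int (a+b) + 1 - (4*int (j+1)+4) div 3"
proof (cases "a \<le> 2")
  case True
  then show ?thesis using small IH n by auto
next
  case False
  then have R: "a + 2*b < 2*n" using n by linarith
  have "int ((a+2*b) div 2) = (int a + 2 * int b) div 2" by (simp add: zdiv_int)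
  with IH R have IH': "2 * int L = 2*int n + int b + 1 - (4*int j+4) div 3 + (2*int n - 2*((int a+2*int b) div 2))" by simp
  have e: "int j - 1 = int (j - 1)" using j by simp
  have par': "even (int a) \<longleftrightarrow> 3 dvd (int j - 1)" unfolding e using par by presburger
  have D: "(4*int j+8) div 3 - (4*int j+4) div 3 = (if int j mod 3 = 1 then 2 else 1)" by presburger
  have D3: "3 dvd (int j - 1) \<longleftrightarrow> int j mod 3 = 1" by presburger
  have m2: "2*((int a + 2*int b) div 2) = int a + 2*int b - int a mod 2" by presburger
  have am: "int a mod 2 = (if int j mod 3 = 1 then 0 else 1)" using par' D3 by presburger
  have X: "(4*int j+8) div 3 - (4*int j+4) div 3 = 2 - int a mod 2" using D am by simp
  have e8: "(4*int (j+1)+4) div 3 = (4*int j+8) div 3"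
    by (rule arg_cong[where f="\<lambda>x. x div 3"]) simp
  have ni: "int n + 1 = int a + int b" using n by linarith
  show ?thesis unfolding e8 using IH' X m2 ni by simp
qed

lemma main_int:
  "1 \<le> n \<Longrightarrow> 2 \<le> k \<Longrightarrow> fib k \<le> n \<Longrightarrow> n < fib (Suc k) \<Longrightarrow>
   2 * int (fib_loops {1..n}) = 2*int n + int (fib k) + 1 - (4*int k+4) div 3
     + (if fib (k+2) < 2*n then 2*int n - 2*int (fib (k+2) div 2) else 0)"
proof (induction n arbitrary: k)
  case 0
  then show ?case by simp
next
  case (Suc n)
  show ?case
  proof (cases "n = 0")
    case True
    have k2: "k = 2"
    proof (rule ccontr)
      assume "k \<noteq> 2"
      then have "3 \<le> k" using Suc.prems by auto
      then have "fib 3 \<le> fib k" by (rule fib_mono)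
      then show False using Suc.prems True by (simp add: eval_nat_numeral)
    qed
    have "{(i, j). i \<in> {1..Suc 0} \<and> j \<in> {1..Suc 0} \<and> i < j \<and> i + j \<in> range fib} = {}" by auto
    then have "fib_loops {1..Suc 0} = 0" unfolding fib_loops_def by (metis card.empty)
    then show ?thesis using True k2 by (simp add: eval_nat_numeral)
  next
    case False
    note ls = loops_Suc[of n]
    show ?thesis
    proof (cases "fib k \<le> n")
      case True
      have IH: "2 * int (fib_loops {1..n}) = 2*int n + int (fib k) + 1 - (4*int k+4) div 3
        + (if fib (k+2) < 2*n then 2*int n - 2*int (fib (k+2) div 2) else 0)"
        using Suc.IH[of k] Suc.prems True False by auto
      have inc: "card {i. 1 \<le> i \<and> i < Suc n \<and> i + Suc n \<in> range fib} = (if fib (k+2) < 2*Suc n then 2 else 1)"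
        using incr[of "Suc n" k] Suc.prems False by auto
      define F where "F = fib (k+2)"
      have d: "int (F div 2) = int F div 2" by (simp add: zdiv_int)
      show ?thesis using IH inc ls d unfolding F_def[symmetric] by (simp split: if_splits; presburger)
    next
      case nle: False
      then have fk: "fib k = Suc n" using Suc.prems by simp
      have k3: "k \<ge> 3"
      proof (rule ccontr)
        assume "\<not> k \<ge> 3"
        then have "k = 2" using Suc.prems by auto
        then show False using fk False by simp
      qed
      define j where "j = k - 1"
      have kj: "k = Suc j" "j \<ge> 2" using k3 unfolding j_def by auto
      define a where "a = fib (j - 1)"
      define b where "b = fib j"
      have ja: "j = Suc (j - 1)" using kj by auto
      have fibk: "fib k = a + b" unfolding a_def b_def kj(1)
        by (metis ja fib.simps(3) add.commute)
      have a1: "a \<ge> 1" unfolding a_def using kj fib_neq_0_nat by (simp add: Suc_le_eq)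
      have IH: "2 * int (fib_loops {1..n}) = 2*int n + int b + 1 - (4*int j+4) div 3
        + (if fib (j+2) < 2*n then 2*int n - 2*int (fib (j+2) div 2) else 0)"
        using Suc.IH[of j] kj False fk fibk a1 unfolding b_def by auto
      have fj2: "fib (j+2) = a + 2*b"
        using fibk kj by (simp add: fib_plus_2 b_def)
      have inc: "card {i. 1 \<le> i \<and> i < Suc n \<and> i + Suc n \<in> range fib} = 1"
      proof -
        have "fib (Suc k) = fib k + fib j" using kj by simp
        moreover have "fib j \<ge> 1" using kj fib_neq_0_nat by (simp add: Suc_le_eq)
        moreover have "fib (k+2) = fib (Suc k) + fib k" by (simp add: fib_plus_2)
        ultimately show ?thesis using incr[of "Suc n" k] fk False by auto
      qed
      have small: "a \<le> 2 \<Longrightarrow> (j=2 \<and> a=1 \<and> b=1) \<or> (j=3 \<and> a=1 \<and> b=2) \<or> (j=4 \<and> a=2 \<and> b=3)"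
      proof -
        assume "a \<le> 2"
        have "j \<le> 4"
        proof (rule ccontr)
          assume "\<not> j \<le> 4"
          then have "4 \<le> j - 1" by auto
          then have "fib 4 \<le> a" unfolding a_def by (rule fib_mono)
          then show False using \<open>a \<le> 2\<close> by (simp add: eval_nat_numeral)
        qed
        then have "j = 2 \<or> j = 3 \<or> j = 4" using kj by auto
        then show ?thesis unfolding a_def b_def by (auto simp: eval_nat_numeral)
      qed
      have par: "even a \<longleftrightarrow> 3 dvd (j - 1)" unfolding a_def by (rule fib_even_iff)
      have n1: "n + 1 = a + b" using fk fibk by simp
      have "2 * int (fib_loops {1..n} + 1) = 2*int (n+1) + int (a+b) + 1 - (4*int (j+1)+4) div 3"
        apply (rule arith_block[OF kj(2) n1 small par])
         apply assumption
        using IH unfolding fj2 by assumption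
      moreover have "\<not> fib (k+2) < 2 * Suc n"
        using fk by (simp add: fib_plus_2 fib_Suc_mono) (metis add_le_mono fib_Suc_mono mult_2 not_less)
      ultimately show ?thesis using ls inc fk fibk kj by simp
    qed
  qed
qed

theorem theorem2p5:
  fixes n k :: nat
  assumes "n \<ge> 1" and "k \<ge> 2" and "fib k \<le> n" and "n < fib (k + 1)"
  shows "(\<forall>S. S \<subseteq> {1..n} \<and> S \<noteq> {} \<longrightarrow> fib_loops S \<le> fib_loops {1..n}) \<and>
         real (fib_loops {1..n}) =
           (if real n \<le> real (fib (k + 2)) / 2
            then real n + (real (fib k) + 1) / 2 - real_of_int \<lfloor>4 * (real k + 1) / 3\<rfloor> / 2
            else 2 * real n + (real (fib k) + 1) / 2 - real_of_int \<lfloor>4 * (real k + 1) / 3\<rfloor> / 2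
                 - real_of_int \<lceil>(real (fib (k + 2)) - 1) / 2\<rceil>)"
proof
  show "\<forall>S. S \<subseteq> {1..n} \<and> S \<noteq> {} \<longrightarrow> fib_loops S \<le> fib_loops {1..n}"
  proof (intro allI impI)
    fix S :: "nat set" assume "S \<subseteq> {1..n} \<and> S \<noteq> {}"
    then have sub: "S \<subseteq> {1..n}" by simp
    have fin: "finite {(i, j). i \<in> {1..n} \<and> j \<in> {1..n} \<and> i < j \<and> i + j \<in> range fib}"
      by (rule finite_subset[of _ "{1..n} \<times> {1..n}"]) auto
    show "fib_loops S \<le> fib_loops {1..n}" unfolding fib_loops_def
      by (rule card_mono[OF fin]) (use sub in auto)
  qed
next
  define F where "F = fib (k+2)"
  define L where "L = fib_loops {1..n}"
  have E: "2 * int L = 2*int n + int (fib k) + 1 - (4*int k+4) div 3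
     + (if F < 2*n then 2*int n - 2*int (F div 2) else 0)"
    using main_int[of n k] assms unfolding F_def L_def by simp
  have fl: "\<lfloor>4 * (real k + 1) / 3\<rfloor> = (4*int k+4) div 3"
  proof -
    have "4 * (real k + 1) / 3 = real_of_int (4*int k+4) / real_of_int 3" by simp
    then show ?thesis by (simp only: floor_divide_of_int_eq)
  qed
  have ce: "\<lceil>(real F - 1) / 2\<rceil> = int F div 2"
  proof -
    have "(real F - 1) / 2 = - (real_of_int (1 - int F) / real_of_int 2)" by (simp add: field_simps)
    then have "\<lceil>(real F - 1) / 2\<rceil> = - ((1 - int F) div 2)"
      by (simp only: ceiling_minus floor_divide_of_int_eq)
    also have "\<dots> = int F div 2" by presburger
    finally show ?thesis .
  qed
  have d: "int (F div 2) = int F div 2" by (simp add: zdiv_int)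
  have cond: "real n \<le> real F / 2 \<longleftrightarrow> \<not> F < 2*n" by linarith
  have ER: "2 * real L = real_of_int (2*int n + int (fib k) + 1 - (4*int k+4) div 3
     + (if F < 2*n then 2*int n - 2*int (F div 2) else 0))"
    using arg_cong[OF E, of real_of_int] by simp
  have h1: "real L = 2 * real n + (real (fib k) + 1) / 2 - real_of_int ((4*int k+4) div 3) / 2
      - real_of_int (int F div 2)" if "F < 2*n"
  proof -
    have "2 * real L = 2 * real n + real (fib k) + 1 - real_of_int ((4*int k+4) div 3)
        + (2 * real n - 2 * real_of_int (int F div 2))" using ER d that by simp
    then show ?thesis by (simp add: field_simps)
  qed
  have h2: "real L = real n + (real (fib k) + 1) / 2 - real_of_int ((4*int k+4) div 3) / 2"
    if "\<not> F < 2*n"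
  proof -
    have "2 * real L = 2 * real n + real (fib k) + 1 - real_of_int ((4*int k+4) div 3)"
      using ER that by simp
    then show ?thesis by (simp add: field_simps)
  qed
  show "real (fib_loops {1..n}) =
           (if real n \<le> real (fib (k + 2)) / 2
            then real n + (real (fib k) + 1) / 2 - real_of_int \<lfloor>4 * (real k + 1) / 3\<rfloor> / 2
            else 2 * real n + (real (fib k) + 1) / 2 - real_of_int \<lfloor>4 * (real k + 1) / 3\<rfloor> / 2
                 - real_of_int \<lceil>(real (fib (k + 2)) - 1) / 2\<rceil>)"
    unfolding F_def[symmetric] L_def[symmetric] fl ce cond using h1 h2 by simp
qed

end
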